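(* Assume the following setting: $\mathcal{F}$ is a nonempty family of graphs with $\chi(\mathcal{F})=r+1\ge 3$; $0<\varepsilon<\frac12$, $0<\sigma<\frac{\varepsilon^3}{7}$, $0\le\alpha\le 1-\frac1r-\varepsilon$; $\mathcal{G}'_n$ is the set of $\mathcal{F}$-free $n$-vertex graphs with minimum degree larger than $(\pi(\mathcal{F})-\varepsilon)n$; and there is $N$ such that for all $n>N$, $|\mathrm{ex}(n,\mathcal{F})-\mathrm{ex}(n-1,\mathcal{F})-\pi(\mathcal{F})n|\le\sigma n$ and $|\lambda_\alpha(\mathcal{G}'_n)-2\mathrm{ex}(n,\mathcal{F})/n|\le\sigma$. Let $G$ be an $\mathcal{F}$-free graph on $n$ vertices with minimum degree $\delta$, let $\mathbf{x}=(x_1,\dots,x_n)$ be a non-negative unit eigenvector of $A_\alpha(G)$ corresponding to $\lambda_\alpha(G)$, and $x=\min\{x_1,\dots,x_n\}$. If $\lambda_{\alpha}(G)\geq \lambda_{\alpha}(\mathcal{G}'_{n})$ and $\delta\leq (\pi (\mathcal{F})-\varepsilon)n$, then for all sufficiently large $n$, $$x^2<\frac{1-\varepsilon^2}{n}.$$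
   Context: $\lambda_\alpha(G)$ is the largest eigenvalue of $A_\alpha(G)=\alpha D(G)+(1-\alpha)A(G)$ ($A$ adjacency matrix, $D$ diagonal degree matrix); $\lambda_\alpha(\mathcal{G}'_n)=\max_{H\in\mathcal{G}'_n}\lambda_\alpha(H)$. $\chi(\mathcal{F})=\min_{F\in\mathcal{F}}\chi(F)$. $\mathrm{ex}(n,\mathcal{F})$ is the maximum number of edges of an $\mathcal{F}$-free $n$-vertex graph, and $\pi(\mathcal{F})=\lim_{n\to\infty}\mathrm{ex}(n,\mathcal{F})/\binom n2$. *)

theory Defs
  imports "Jordan_Normal_Form.Char_Poly"
begin

definition graph_on :: "nat \<Rightarrow> (nat \<Rightarrow> nat \<Rightarrow> bool) \<Rightarrow> bool" where
  "graph_on n E \<longleftrightarrow> (\<forall>u v. E u v \<longrightarrow> u < n \<and> v < n \<and> u \<noteq> v \<and> E v u)"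

text \<open>A graph of a family is given as a pair (number of vertices, edge relation).\<close>
type_synonym graph = "nat \<times> (nat \<Rightarrow> nat \<Rightarrow> bool)"

definition contains :: "nat \<Rightarrow> (nat \<Rightarrow> nat \<Rightarrow> bool) \<Rightarrow> graph \<Rightarrow> bool" where
  "contains n E H \<longleftrightarrow> (\<exists>f. inj_on f {..<fst H} \<and> f ` {..<fst H} \<subseteq> {..<n}
      \<and> (\<forall>u v. snd H u v \<longrightarrow> E (f u) (f v)))"

definition F_free :: "graph set \<Rightarrow> nat \<Rightarrow> (nat \<Rightarrow> nat \<Rightarrow> bool) \<Rightarrow> bool" where
  "F_free Fam n E \<longleftrightarrow> (\<forall>H\<in>Fam. \<not> contains n E H)"

definition colorable :: "graph \<Rightarrow> nat \<Rightarrow> bool" where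
  "colorable H k \<longleftrightarrow> (\<exists>c. (\<forall>v<fst H. c v < k) \<and> (\<forall>u v. snd H u v \<longrightarrow> c u \<noteq> c v))"

definition chromatic_number :: "graph \<Rightarrow> nat" where
  "chromatic_number H = (LEAST k. colorable H k)"

definition chi_family :: "graph set \<Rightarrow> nat" where
  "chi_family Fam = (LEAST k. \<exists>H\<in>Fam. chromatic_number H = k)"

definition num_edges :: "nat \<Rightarrow> (nat \<Rightarrow> nat \<Rightarrow> bool) \<Rightarrow> nat" where
  "num_edges n E = card {(u, v). u < v \<and> v < n \<and> E u v}"

definition ex_num :: "nat \<Rightarrow> graph set \<Rightarrow> nat" where
  "ex_num n Fam = Max {num_edges n E | E. graph_on n E \<and> F_free Fam n E}"

definition turan_density :: "graph set \<Rightarrow> real" where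
  "turan_density Fam = lim (\<lambda>n. real (ex_num n Fam) / real (n choose 2))"

definition degree :: "nat \<Rightarrow> (nat \<Rightarrow> nat \<Rightarrow> bool) \<Rightarrow> nat \<Rightarrow> nat" where
  "degree n E v = card {u. u < n \<and> E v u}"

definition min_degree :: "nat \<Rightarrow> (nat \<Rightarrow> nat \<Rightarrow> bool) \<Rightarrow> nat" where
  "min_degree n E = Min (degree n E ` {..<n})"

definition A_alpha :: "real \<Rightarrow> nat \<Rightarrow> (nat \<Rightarrow> nat \<Rightarrow> bool) \<Rightarrow> real mat" where
  "A_alpha \<alpha> n E = mat n n (\<lambda>(i, j).
      (if i = j then \<alpha> * real (degree n E i) else 0) + (1 - \<alpha>) * (if E i j then 1 else 0))"

definition lambda_alpha :: "real \<Rightarrow> nat \<Rightarrow> (nat \<Rightarrow> nat \<Rightarrow> bool) \<Rightarrow> real" where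
  "lambda_alpha \<alpha> n E = Max {k. eigenvalue (A_alpha \<alpha> n E) k}"

definition G'_set :: "graph set \<Rightarrow> real \<Rightarrow> nat \<Rightarrow> (nat \<Rightarrow> nat \<Rightarrow> bool) set" where
  "G'_set Fam \<epsilon> n = {E. graph_on n E \<and> F_free Fam n E
      \<and> real (min_degree n E) > (turan_density Fam - \<epsilon>) * real n}"

definition lambda_family :: "real \<Rightarrow> graph set \<Rightarrow> real \<Rightarrow> nat \<Rightarrow> real" where
  "lambda_family \<alpha> Fam \<epsilon> n = Max (lambda_alpha \<alpha> n ` G'_set Fam \<epsilon> n)"

end

theory Submission
  imports Defs
begin


lemma cs_sum:
  fixes f :: "'a \<Rightarrow> real"
  assumes "finite A"
  shows "(\<Sum>i\<in>A. f i)^2 \<le> real (card A) * (\<Sum>i\<in>A. (f i)^2)"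
proof -
  define S where "S = (\<Sum>i\<in>A. f i)"
  define Q where "Q = (\<Sum>i\<in>A. (f i)^2)"
  have inner: "(\<Sum>j\<in>A. (f i - f j)^2) = real (card A) * (f i)^2 + Q - 2 * f i * S" for i
  proof -
    have "(\<Sum>j\<in>A. (f i - f j)^2) = (\<Sum>j\<in>A. (f i)^2 + (f j)^2 - 2 * f i * f j)"
      by (intro sum.cong refl) (simp add: power2_diff)
    also have "\<dots> = (\<Sum>j\<in>A. (f i)^2) + (\<Sum>j\<in>A. (f j)^2) - (\<Sum>j\<in>A. 2 * f i * f j)"
      by (simp only: sum.distrib sum_subtractf)
    also have "(\<Sum>j\<in>A. 2 * f i * f j) = 2 * f i * S"
      unfolding S_def by (simp only: sum_distrib_left)
    finally show ?thesis unfolding Q_def by simp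
  qed
  have "0 \<le> (\<Sum>i\<in>A. \<Sum>j\<in>A. (f i - f j)^2)" by (intro sum_nonneg) auto
  also have "\<dots> = (\<Sum>i\<in>A. real (card A) * (f i)^2 + Q - 2 * f i * S)"
    by (simp only: inner)
  also have "\<dots> = (\<Sum>i\<in>A. real (card A) * (f i)^2) + (\<Sum>i\<in>A. Q) - (\<Sum>i\<in>A. 2 * S * f i)"
    by (simp only: sum.distrib sum_subtractf mult.commute mult.left_commute)
  also have "\<dots> = real (card A) * Q + real (card A) * Q - 2 * S * S"
    unfolding Q_def S_def by (simp add: sum_distrib_left)
  finally have "2 * S * S \<le> 2 * (real (card A) * Q)" by linarith
  thus ?thesis unfolding S_def Q_def by (simp add: power2_eq_square)
qed

lemma ex_lower:
  fixes P \<sigma> :: real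
  assumes "\<forall>n>N. real (ex_num n Fam) - real (ex_num (n - 1) Fam) - P * real n \<ge> - (\<sigma> * real n)"
    and "N \<le> n"
  shows "real (ex_num n Fam) \<ge> real (ex_num N Fam) + (P - \<sigma>) * (real n * (real n + 1) - real N * (real N + 1)) / 2"
  using assms(2)
proof (induction n rule: dec_induct)
  case base then show ?case by simp
next
  case (step n)
  have "real (ex_num (Suc n) Fam) - real (ex_num n Fam) - P * real (Suc n) \<ge> - (\<sigma> * real (Suc n))"
    using assms(1) step(1) by (metis diff_Suc_1 le_imp_less_Suc)
  moreover have "(P - \<sigma>) * (real (Suc n) * (real (Suc n) + 1) - real N * (real N + 1)) / 2
     = (P - \<sigma>) * (real n * (real n + 1) - real N * (real N + 1)) / 2 + (P * real (Suc n) - \<sigma> * real (Suc n))"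
    by (simp add: field_simps)
  ultimately show ?case using step(3) by linarith
qed

lemma row_eq:
  assumes "u < n" and that: "dim_vec x = n"
  shows "(A_alpha \<alpha> n E *\<^sub>v x) $ u = \<alpha> * real (degree n E u) * x $ u
     + (1 - \<alpha>) * (\<Sum>j\<in>{j. j < n \<and> E u j}. x $ j)"
proof -
  have "(A_alpha \<alpha> n E *\<^sub>v x) $ u = (\<Sum>j\<in>{0..<n}. ((if u = j then \<alpha> * real (degree n E u) else 0) + (1 - \<alpha>) * (if E u j then 1 else 0)) * x $ j)"
  proof -
    have d: "dim_row (A_alpha \<alpha> n E) = n" "dim_col (A_alpha \<alpha> n E) = n"
      unfolding A_alpha_def by simp_all
    have "(A_alpha \<alpha> n E *\<^sub>v x) $ u = (\<Sum>j\<in>{0..<n}. row (A_alpha \<alpha> n E) u $ j * x $ j)"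
      using assms d by (simp only: index_mult_mat_vec scalar_prod_def)
    also have "\<dots> = (\<Sum>j\<in>{0..<n}. ((if u = j then \<alpha> * real (degree n E u) else 0) + (1 - \<alpha>) * (if E u j then 1 else 0)) * x $ j)"
      by (intro sum.cong refl) (use assms d in \<open>simp add: A_alpha_def\<close>)
    finally show ?thesis .
  qed
  also have "\<dots> = (\<Sum>j\<in>{0..<n}. (if u = j then \<alpha> * real (degree n E u) * x $ j else 0)) + (\<Sum>j\<in>{0..<n}. (1 - \<alpha>) * (if E u j then x $ j else 0))"
    unfolding sum.distrib[symmetric] by (intro sum.cong) (auto simp: algebra_simps)
  also have "(\<Sum>j\<in>{0..<n}. (if u = j then \<alpha> * real (degree n E u) * x $ j else 0)) = \<alpha> * real (degree n E u) * x $ u"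
    using assms by (simp add: sum.delta')
  also have "(\<Sum>j\<in>{0..<n}. (1 - \<alpha>) * (if E u j then x $ j else 0)) = (1 - \<alpha>) * (\<Sum>j\<in>{j. j < n \<and> E u j}. x $ j)"
    unfolding sum_distrib_left[symmetric] sum.inter_filter[symmetric, OF finite_atLeastLessThan]
    by (intro arg_cong[where f="\<lambda>t. (1 - \<alpha>) * t"] sum.cong) auto
  finally show ?thesis .
qed

lemma key_ineq:
  fixes lam d k \<alpha> \<epsilon> m S Q xu :: real and n :: nat
  assumes a1: "\<alpha> \<le> 1" and alpha: "0 \<le> \<alpha>" and k_def: "k = 2/3 * \<epsilon>^2"
    and d0: "d \<ge> 0" and dle: "d \<le> real n" and m0: "m \<ge> 0" and mx: "m \<le> xu"
    and rowu: "lam * xu = \<alpha> * d * xu + (1 - \<alpha>) * S"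
    and cs: "S^2 \<le> d * Q" and Qb: "Q \<le> 1 - (real n - d) * m^2"
    and mbig: "m^2 \<ge> (1 - \<epsilon>^2) / real n" and npos: "n > 0"
    and eps: "0 < \<epsilon>" "\<epsilon> < 1/2" and e2: "\<epsilon>^2 < \<epsilon>/2"
  shows "lam \<le> d + k * real n"
  proof (rule ccontr)
    assume "\<not> lam \<le> d + k * real n"
    hence big: "lam > d + k * real n" by simp
    define \<beta> where "\<beta> = 1 - \<alpha>"
    have b0: "\<beta> \<ge> 0" "\<beta> \<le> 1" unfolding \<beta>_def using a1 alpha by auto
    define y where "y = lam - \<alpha> * d"
    define z where "z = \<beta> * (d + k * real n)"
    have k0: "k \<ge> 0" unfolding k_def by simp
    have z0: "z \<ge> 0" unfolding z_def using b0 d0 k0 by simp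
    have "\<beta> * (k * real n) \<le> k * real n" using b0 k0 by (simp add: mult_left_le_one_le)
    hence yz: "y > z" unfolding y_def z_def \<beta>_def using big by (simp add: algebra_simps)
    have y2: "y^2 > z^2" using yz z0 by (simp add: power_strict_mono)
    have y0: "y \<ge> 0" using yz z0 by simp
    have yx: "y * xu = \<beta> * S" using rowu unfolding y_def \<beta>_def by (simp add: algebra_simps)
    have ym: "y * m \<le> y * xu" by (rule mult_left_mono[OF mx y0])
    have ym0: "0 \<le> y * m" using y0 m0 by simp
    have "(y * m)^2 \<le> (\<beta> * S)^2" using power_mono[OF ym ym0, of 2] yx by simp
    also have "\<dots> = \<beta>^2 * S^2" by (rule power_mult_distrib)
    also have "\<dots> \<le> \<beta>^2 * (d * Q)" by (rule mult_left_mono[OF cs]) simp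
    also have "\<dots> \<le> \<beta>^2 * (d * (1 - (real n - d) * m^2))"
      by (rule mult_left_mono[OF mult_left_mono[OF Qb d0]]) simp
    finally have F: "(y * m)^2 \<le> \<beta>^2 * (d * (1 - (real n - d) * m^2))" .
    have eq1: "(y * m)^2 = y^2 * m^2" by (rule power_mult_distrib)
    have eq2: "\<beta>^2 * (d * (1 - (real n - d) * m^2)) = \<beta>^2 * d - \<beta>^2 * d * (real n - d) * m^2"
      by (simp add: algebra_simps)
    define T where "T = y^2 + \<beta>^2 * d * (real n - d)"
    have eq3: "T * m^2 = y^2 * m^2 + \<beta>^2 * d * (real n - d) * m^2"
      unfolding T_def by (simp only: distrib_right)
    have A: "T * m^2 \<le> \<beta>^2 * d" using F eq1 eq2 eq3 by linarith
    have T0: "T \<ge> 0" unfolding T_def using dle d0 by simp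
    have nm: "real n * m^2 \<ge> 1 - \<epsilon>^2" using mbig npos by (simp add: field_simps)
    have "T * (1 - \<epsilon>^2) \<le> T * (real n * m^2)" by (rule mult_left_mono[OF nm T0])
    also have "\<dots> = real n * (T * m^2)" by (simp only: mult_ac)
    also have "\<dots> \<le> real n * (\<beta>^2 * d)" by (rule mult_left_mono[OF A]) simp
    finally have up: "T * (1 - \<epsilon>^2) \<le> \<beta>^2 * d * real n" by (simp only: mult_ac)
    have e4: "\<epsilon>^2 < 1/4" using eps e2 by linarith
    have ep: "1 - \<epsilon>^2 > 0" using e4 by simp
    have fac: "(1 - \<epsilon>^2) * (1 + 2 * k) \<ge> 1"
    proof -
      have h: "\<epsilon>^2 * \<epsilon>^2 \<le> \<epsilon>^2 * (1/4)" by (rule mult_left_mono) (use e4 in simp_all)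
      have "(1 - \<epsilon>^2) * (1 + 2 * k) = 1 + \<epsilon>^2 / 3 - 4/3 * (\<epsilon>^2 * \<epsilon>^2)"
        unfolding k_def by (simp add: field_simps power2_eq_square)
      thus ?thesis using h by linarith
    qed
    have inner: "(d + k * real n)^2 + d * (real n - d) = (1 + 2 * k) * (d * real n) + (k * real n)^2"
      by (simp add: power2_eq_square algebra_simps)
    have "(1 - \<epsilon>^2) * ((1 + 2 * k) * (d * real n)) \<le> (1 - \<epsilon>^2) * ((1 + 2 * k) * (d * real n) + (k * real n)^2)"
      by (rule mult_left_mono) (use ep in simp_all)
    moreover have "(1 - \<epsilon>^2) * ((1 + 2 * k) * (d * real n)) \<ge> d * real n"
    proof -
      have dn: "d * real n \<ge> 0" using d0 by simp
      have "1 * (d * real n) \<le> ((1 - \<epsilon>^2) * (1 + 2 * k)) * (d * real n)"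
        by (rule mult_right_mono[OF fac dn])
      thus ?thesis by (simp only: mult.assoc mult_1)
    qed
    ultimately have W: "(1 - \<epsilon>^2) * ((d + k * real n)^2 + d * (real n - d)) \<ge> d * real n"
      unfolding inner by linarith
    have z2: "z^2 = \<beta>^2 * (d + k * real n)^2" unfolding z_def by (rule power_mult_distrib)
    have "\<beta>^2 * ((d + k * real n)^2 + d * (real n - d)) = \<beta>^2 * (d + k * real n)^2 + \<beta>^2 * d * (real n - d)"
      by (simp only: distrib_left mult.assoc)
    hence "T > \<beta>^2 * ((d + k * real n)^2 + d * (real n - d))"
      using y2 z2 unfolding T_def by linarith
    hence "T * (1 - \<epsilon>^2) > \<beta>^2 * ((d + k * real n)^2 + d * (real n - d)) * (1 - \<epsilon>^2)"
      by (rule mult_strict_right_mono[OF _ ep])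
    moreover have "\<beta>^2 * ((d + k * real n)^2 + d * (real n - d)) * (1 - \<epsilon>^2) \<ge> \<beta>^2 * (d * real n)"
    proof -
      have "\<beta>^2 * (d * real n) \<le> \<beta>^2 * ((1 - \<epsilon>^2) * ((d + k * real n)^2 + d * (real n - d)))"
        by (rule mult_left_mono[OF W]) simp
      thus ?thesis by (simp only: mult_ac)
    qed
    moreover have "\<beta>^2 * (d * real n) = \<beta>^2 * d * real n" by (simp only: mult.assoc)
    ultimately show False using up by linarith
  qed


theorem lemma5p4:
  fixes Fam :: "graph set" and r N :: nat and \<epsilon> \<sigma> \<alpha> :: real
  assumes graphs: "\<forall>H\<in>Fam. graph_on (fst H) (snd H)"
    and nonempty: "Fam \<noteq> {}"
    and chi: "chi_family Fam = r + 1" and r: "r + 1 \<ge> 3"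
    and eps: "0 < \<epsilon>" "\<epsilon> < 1/2"
    and sigma: "0 < \<sigma>" "\<sigma> < \<epsilon>^3 / 7"
    and alpha: "0 \<le> \<alpha>" "\<alpha> \<le> 1 - 1 / real r - \<epsilon>"
    and N: "\<forall>n>N. \<bar>real (ex_num n Fam) - real (ex_num (n - 1) Fam) - turan_density Fam * real n\<bar>
                      \<le> \<sigma> * real n
              \<and> \<bar>lambda_family \<alpha> Fam \<epsilon> n - 2 * real (ex_num n Fam) / real n\<bar> \<le> \<sigma>"
  shows "\<exists>N0. \<forall>n>N0. \<forall>E x.
           graph_on n E \<longrightarrow> F_free Fam n E \<longrightarrow>
           eigenvector (A_alpha \<alpha> n E) x (lambda_alpha \<alpha> n E) \<longrightarrow>
           (\<forall>i<n. x $ i \<ge> 0) \<longrightarrow> (\<Sum>i<n. (x $ i)^2) = 1 \<longrightarrow>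
           lambda_alpha \<alpha> n E \<ge> lambda_family \<alpha> Fam \<epsilon> n \<longrightarrow>
           real (min_degree n E) \<le> (turan_density Fam - \<epsilon>) * real n \<longrightarrow>
           (Min ((\<lambda>i. x $ i) ` {..<n}))^2 < (1 - \<epsilon>^2) / real n"
proof -
  define P where "P = turan_density Fam"
  define k where "k = 2/3 * \<epsilon>^2"
  define c where "c = \<epsilon> - k - \<sigma>"
  define K where "K = \<bar>P - \<sigma>\<bar> * (real N * (real N + 1))"
  have e2: "\<epsilon>^2 < \<epsilon>/2" using eps by (simp add: power2_eq_square)
  have e3: "\<epsilon>^3 < \<epsilon>" using power_strict_decreasing[of 1 3 \<epsilon>] eps by simp
  have cpos: "c > 0" unfolding c_def k_def using e2 e3 sigma eps by linarith
  have Kpos: "K \<ge> 0" unfolding K_def by simp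
  define N0 where "N0 = max N (nat \<lceil>(K + \<sigma>) / c\<rceil>)"
  have exl: "\<forall>n>N. real (ex_num n Fam) - real (ex_num (n - 1) Fam) - P * real n \<ge> - (\<sigma> * real n)"
  proof (intro allI impI)
    fix n assume "N < n"
    hence "\<bar>real (ex_num n Fam) - real (ex_num (n - 1) Fam) - P * real n\<bar> \<le> \<sigma> * real n"
      using N unfolding P_def by blast
    thus "real (ex_num n Fam) - real (ex_num (n - 1) Fam) - P * real n \<ge> - (\<sigma> * real n)"
      by (simp only: abs_le_iff) linarith
  qed
  show ?thesis
  proof (rule exI[of _ N0], intro allI impI)
    fix n E x
    assume n: "N0 < n" and gE: "graph_on n E" and free: "F_free Fam n E"
      and ev: "eigenvector (A_alpha \<alpha> n E) x (lambda_alpha \<alpha> n E)"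
      and xnn: "\<forall>i<n. x $ i \<ge> 0" and unit: "(\<Sum>i<n. (x $ i)^2) = 1"
      and lamge: "lambda_alpha \<alpha> n E \<ge> lambda_family \<alpha> Fam \<epsilon> n"
      and md: "real (min_degree n E) \<le> (turan_density Fam - \<epsilon>) * real n"
    define lam where "lam = lambda_alpha \<alpha> n E"
    define m where "m = Min ((\<lambda>i. x $ i) ` {..<n})"
    show "(Min ((\<lambda>i. x $ i) ` {..<n}))^2 < (1 - \<epsilon>^2) / real n"
    proof (rule ccontr)
      assume "\<not> (Min ((\<lambda>i. x $ i) ` {..<n}))^2 < (1 - \<epsilon>^2) / real n"
      hence mbig: "m^2 \<ge> (1 - \<epsilon>^2) / real n" unfolding m_def by simp
      have nN: "n > N" using n unfolding N0_def by simp
      have "nat \<lceil>(K + \<sigma>) / c\<rceil> < n" using n unfolding N0_def by simp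
      hence "real (nat \<lceil>(K + \<sigma>) / c\<rceil>) < real n" by (simp only: of_nat_less_iff)
      hence nN0: "real n > (K + \<sigma>) / c" using real_nat_ceiling_ge[of "(K + \<sigma>) / c"] by linarith
      have npos: "n > 0" using nN by simp
      have dimA: "dim_row (A_alpha \<alpha> n E) = n" unfolding A_alpha_def by simp
      have evc: "x \<in> carrier_vec (dim_row (A_alpha \<alpha> n E))" and eveq: "A_alpha \<alpha> n E *\<^sub>v x = lam \<cdot>\<^sub>v x"
        using ev unfolding eigenvector_def lam_def by blast+
      have dimx: "dim_vec x = n" by (rule trans[OF carrier_vecD[OF evc] dimA])
      have fin: "finite ((\<lambda>i. x $ i) ` {..<n})" "(\<lambda>i. x $ i) ` {..<n} \<noteq> {}" using npos by auto
      have mle: "\<And>i. i < n \<Longrightarrow> m \<le> x $ i" unfolding m_def using fin by auto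
      have "m \<in> (\<lambda>i. x $ i) ` {..<n}" unfolding m_def using fin by (rule Min_in)
      hence m0: "m \<ge> 0" using xnn by auto
      have finD: "finite (degree n E ` {..<n})" "degree n E ` {..<n} \<noteq> {}" using npos by auto
      have "min_degree n E \<in> degree n E ` {..<n}" unfolding min_degree_def using finD by (rule Min_in)
      then obtain u where u: "u < n" "degree n E u = min_degree n E" by auto
      define Nb where "Nb = {j. j < n \<and> E u j}"
      define d where "d = real (min_degree n E)"
      have cardNb: "real (card Nb) = d" unfolding Nb_def d_def using u by (simp add: degree_def)
      have Nbsub: "Nb \<subseteq> {..<n}" unfolding Nb_def by auto
      have finNb: "finite Nb" using Nbsub finite_subset by blast
      have cn: "card Nb \<le> n" using card_mono[OF finite_lessThan Nbsub] by simp
      have "real (card Nb) \<le> real n" using cn by simp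
      hence dle: "d \<le> real n" using cardNb by linarith
      have d0: "d \<ge> 0" unfolding d_def by simp
      define S where "S = (\<Sum>j\<in>Nb. x $ j)"
      define Q where "Q = (\<Sum>j\<in>Nb. (x $ j)^2)"
      have S0: "S \<ge> 0" unfolding S_def using xnn Nbsub by (auto intro!: sum_nonneg)
      have cs: "S^2 \<le> d * Q" unfolding S_def Q_def using cs_sum[OF finNb, of "\<lambda>j. x $ j"] cardNb by simp
      have "1 = Q + (\<Sum>j\<in>{..<n} - Nb. (x $ j)^2)"
        unfolding unit[symmetric] Q_def using sum.subset_diff[OF Nbsub] by (simp add: add.commute)
      moreover have "(\<Sum>j\<in>{..<n} - Nb. (x $ j)^2) \<ge> (real n - d) * m^2"
      proof -
        have sb: "real (card ({..<n} - Nb)) * m^2 \<le> (\<Sum>j\<in>{..<n} - Nb. (x $ j)^2)"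
          by (rule sum_bounded_below) (use mle m0 in \<open>auto intro: power_mono\<close>)
        have "card ({..<n} - Nb) = n - card Nb" using card_Diff_subset[OF finNb Nbsub] by simp
        hence "real (card ({..<n} - Nb)) = real n - real (card Nb)" using cn by (simp add: of_nat_diff)
        hence "real (card ({..<n} - Nb)) = real n - d" using cardNb by simp
        thus ?thesis using sb by simp
      qed
      ultimately have Qb: "Q \<le> 1 - (real n - d) * m^2" by linarith
      have rowu: "lam * x $ u = \<alpha> * d * x $ u + (1 - \<alpha>) * S"
        using row_eq[OF u(1) dimx, of \<alpha> E] eveq u dimx unfolding S_def Nb_def d_def by simp
      have "1 / real r \<ge> 0" by simp
      hence a1: "\<alpha> \<le> 1" using alpha(2) eps by linarith
      have key: "lam \<le> d + k * real n"
        by (rule key_ineq[OF a1 alpha(1) k_def d0 dle m0 mle[OF u(1)] rowu cs Qb mbig npos eps e2])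
      have Pe: "P \<ge> \<epsilon>"
      proof (rule ccontr)
        assume "\<not> P \<ge> \<epsilon>"
        hence "(P - \<epsilon>) * real n < 0" using npos by (simp add: mult_neg_pos)
        thus False using md d0 unfolding P_def d_def by linarith
      qed
      have "real (ex_num n Fam) \<ge> real (ex_num N Fam) + (P - \<sigma>) * (real n * (real n + 1) - real N * (real N + 1)) / 2"
        using ex_lower[OF exl] nN by simp
      moreover have "(P - \<sigma>) * (real n * (real n + 1) - real N * (real N + 1)) = (P - \<sigma>) * (real n * (real n + 1)) - (P - \<sigma>) * (real N * (real N + 1))"
        by (rule right_diff_distrib)
      moreover have "real (ex_num N Fam) \<ge> 0" by simp
      ultimately have exb: "2 * real (ex_num n Fam) \<ge> (P - \<sigma>) * (real n * (real n + 1)) - (P - \<sigma>) * (real N * (real N + 1))"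
        by linarith
      have M0: "real N * (real N + 1) \<ge> 0" by simp
      have "(P - \<sigma>) * (real N * (real N + 1)) \<le> K"
        unfolding K_def by (rule mult_right_mono) (simp_all add: M0)
      moreover have "K \<le> K * real n" using Kpos npos by (simp add: mult_le_cancel_left1)
      ultimately have "(P - \<sigma>) * (real N * (real N + 1)) \<le> K * real n" by linarith
      hence "2 * real (ex_num n Fam) \<ge> ((P - \<sigma>) * (real n + 1) - K) * real n"
        using exb by (simp add: algebra_simps)
      hence "2 * real (ex_num n Fam) / real n \<ge> (P - \<sigma>) * (real n + 1) - K"
        using npos by (simp add: field_simps)
      moreover have "lambda_family \<alpha> Fam \<epsilon> n \<ge> 2 * real (ex_num n Fam) / real n - \<sigma>"
      proof -
        have "\<bar>lambda_family \<alpha> Fam \<epsilon> n - 2 * real (ex_num n Fam) / real n\<bar> \<le> \<sigma>" using N nN by blast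
        thus ?thesis by (simp only: abs_le_iff) linarith
      qed
      ultimately have "lam \<ge> (P - \<sigma>) * (real n + 1) - K - \<sigma>" using lamge unfolding lam_def by linarith
      moreover have "(P - \<sigma>) * (real n + 1) \<ge> (P - \<sigma>) * real n" using Pe sigma e3 by (simp add: algebra_simps)
      moreover have "d \<le> (P - \<epsilon>) * real n" using md unfolding d_def P_def by simp
      moreover have "c * real n = \<epsilon> * real n - k * real n - \<sigma> * real n" unfolding c_def by (simp only: left_diff_distrib)
      moreover have "(P - \<sigma>) * real n = P * real n - \<sigma> * real n" by (simp only: left_diff_distrib)
      moreover have "(P - \<epsilon>) * real n = P * real n - \<epsilon> * real n" by (simp only: left_diff_distrib)
      ultimately have "c * real n \<le> K + \<sigma>" using key by linarith
      moreover have "c * real n > K + \<sigma>" using nN0 cpos by (simp add: field_simps)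
      ultimately show False by linarith
    qed
  qed
qed

end
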